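(* Let $n\ge 2$ and $M=S+L\in M(n,\mathbb R)$ with $S\in\mathcal S_{\neq}$ and $L\in so(n)$, and suppose that $S$ and $L$ do not share any $k$-dimensional real invariant subspace, for every $k=1,\dots,n-1$. For $x>0$ let $\Pi_x=x^{-M}x^{-M^*}$. Then $$\bigcap_{x>0}G(\Pi_x)=\{I,-I\}.$$
   Context: $\mathcal S(n,\mathbb R)$ denotes the real symmetric $n\times n$ matrices, and $\mathcal S_{\neq}\subseteq\mathcal S(n,\mathbb R)$ the symmetric matrices whose $n$ eigenvalues are pairwise distinct. $so(n)$ denotes the real skew-symmetric $n\times n$ matrices. For $x>0$, $x^{-M}=\exp(-M\log x)$. A real invariant subspace of a matrix $T\in M(n,\mathbb R)$ is a linear subspace $V\subseteq\mathbb R^n$ with $TV\subseteq V$. For a matrix $\Pi\in M(n,\mathbb R)$, $G(\Pi)=\{O\in O(n):O\Pi=\Pi O\}$, where $O(n)$ is the orthogonal group. No restriction on the eigenvalues of $M$ is imposed. *)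

theory Defs
  imports "HOL-Analysis.Analysis"
begin

fun mat_pow :: "real^'n^'n \<Rightarrow> nat \<Rightarrow> real^'n^'n" where
  "mat_pow A 0 = mat 1"
| "mat_pow A (Suc k) = A ** mat_pow A k"

definition mat_exp :: "real^'n^'n \<Rightarrow> real^'n^'n" where
  "mat_exp A = (\<Sum>k. (1 / fact k) *\<^sub>R mat_pow A k)"

definition mat_neg_powr :: "real \<Rightarrow> real^'n^'n \<Rightarrow> real^'n^'n" where
  "mat_neg_powr x M = mat_exp (- (ln x *\<^sub>R M))"

definition symmetric_matrix :: "real^'n^'n \<Rightarrow> bool" where
  "symmetric_matrix S \<longleftrightarrow> transpose S = S"

definition skew_symmetric_matrix :: "real^'n^'n \<Rightarrow> bool" where
  "skew_symmetric_matrix L \<longleftrightarrow> transpose L = - L"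

definition real_eigenvalues :: "real^'n^'n \<Rightarrow> real set" where
  "real_eigenvalues A = {c. \<exists>v. v \<noteq> 0 \<and> A *v v = c *\<^sub>R v}"

definition sym_distinct_eig :: "real^'n^'n \<Rightarrow> bool" where
  "sym_distinct_eig S \<longleftrightarrow> symmetric_matrix S \<and> card (real_eigenvalues S) = CARD('n)"

definition real_invariant_subspace :: "real^'n^'n \<Rightarrow> (real^'n) set \<Rightarrow> bool" where
  "real_invariant_subspace T V \<longleftrightarrow> subspace V \<and> (\<forall>v\<in>V. T *v v \<in> V)"

definition orth_commutant :: "real^'n^'n \<Rightarrow> (real^'n^'n) set" where
  "orth_commutant P = {Q. orthogonal_matrix Q \<and> Q ** P = P ** Q}"

end

theory Submission
  imports Defs
begin


lemma mm_add_r: "((A::real^'n^'n) + B) ** C = A ** C + B ** C"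
  by (vector matrix_matrix_mult_def sum.distrib distrib_right)
lemma mm_scale_r: "((c *\<^sub>R (A::real^'n^'n)) ** B) = c *\<^sub>R (A ** B)"
  by (simp add: scalar_matrix_assoc)
lemma mm_scale_l: "((A::real^'n^'n) ** (c *\<^sub>R B)) = c *\<^sub>R (A ** B)"
  by (simp add: matrix_scalar_ac scalar_matrix_assoc)

lemma bb_mm: "bounded_bilinear ((**) :: real^'n^'n \<Rightarrow> real^'n^'n \<Rightarrow> real^'n^'n)"
  unfolding bilinear_conv_bounded_bilinear[symmetric] bilinear_def linear_iff
  by (simp add: matrix_add_ldistrib mm_add_r mm_scale_r mm_scale_l)

lemmas mm_diff_l = bounded_bilinear.diff_right[OF bb_mm]
thm mm_diff_l bounded_bilinear.minus_left[OF bb_mm]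

lemma mat_pow_scale: "mat_pow (t *\<^sub>R A) k = (t ^ k) *\<^sub>R mat_pow (A::real^'n^'n) k"
  by (induction k) (auto simp: mm_scale_r mm_scale_l)



lemma mm_norm_bound: "\<exists>K\<ge>0. \<forall>(X::real^'n^'n) (Y::real^'n^'n). norm (X ** Y) \<le> K * norm X * norm Y"
proof -
  obtain K where K: "K > 0" "\<And>(X::real^'n^'n) (Y::real^'n^'n). norm (X ** Y) \<le> norm X * norm Y * K"
    using bounded_bilinear.pos_bounded[OF bb_mm[where 'n='n]] by blast
  show ?thesis using K by (intro exI[of _ K]) (auto simp: mult_ac)
qed

lemma mat_pow_bound:
  fixes A :: "real^'n^'n"
  shows "\<exists>N c. N \<ge> 0 \<and> c \<ge> 0 \<and> (\<forall>k. norm (mat_pow A k) \<le> N * c ^ k)"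
proof -
  obtain K where K: "K \<ge> 0" "\<And>(X::real^'n^'n) (Y::real^'n^'n). norm (X ** Y) \<le> K * norm X * norm Y"
    using mm_norm_bound[where 'n='n] by blast
  have "norm (mat_pow A k) \<le> norm (mat 1 :: real^'n^'n) * (K * norm A) ^ k" for k
  proof (induction k)
    case 0 then show ?case by simp
  next
    case (Suc k)
    have "norm (mat_pow A (Suc k)) \<le> K * norm A * norm (mat_pow A k)"
      using K(2)[of A "mat_pow A k"] by simp
    also have "\<dots> \<le> K * norm A * (norm (mat 1 :: real^'n^'n) * (K * norm A) ^ k)"
      using Suc K(1) by (intro mult_left_mono) auto
    finally show ?case by (simp add: algebra_simps)
  qed
  then show ?thesis using K(1)
    by (intro exI[of _ "norm (mat 1::real^'n^'n)"] exI[of _ "K * norm A"] conjI) auto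
qed

lemma powser_facts:
  fixes C :: "nat \<Rightarrow> real^'n^'n"
  assumes D: "D \<ge> 0" and R: "R \<ge> 0" and bnd: "\<And>k. norm (C k) \<le> D * R ^ k / fact k"
  shows "summable (\<lambda>k. t ^ k *\<^sub>R C k)"
    and "((\<lambda>t. \<Sum>k. t ^ k *\<^sub>R C k) \<longlongrightarrow> C 0) (at 0)"
proof -
  have ex: "summable (\<lambda>k. x ^ k / fact k)" for x :: real
    using exp_converges[of x] by (simp add: sums_iff divide_inverse mult.commute)
  show sm: "summable (\<lambda>k. t ^ k *\<^sub>R C k)" for t
  proof (rule summable_comparison_test[where g = "\<lambda>k. D * ((\<bar>t\<bar> * R) ^ k / fact k)"])
    show "\<exists>N. \<forall>n\<ge>N. norm (t ^ n *\<^sub>R C n) \<le> D * ((\<bar>t\<bar> * R) ^ n / fact n)"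
    proof (intro exI allI impI)
      fix n
      have "norm (t ^ n *\<^sub>R C n) = \<bar>t\<bar> ^ n * norm (C n)" by (simp add: power_abs)
      also have "\<dots> \<le> \<bar>t\<bar> ^ n * (D * R ^ n / fact n)" by (intro mult_left_mono bnd) auto
      also have "\<dots> = D * ((\<bar>t\<bar> * R) ^ n / fact n)" by (simp add: power_mult_distrib)
      finally show "norm (t ^ n *\<^sub>R C n) \<le> D * ((\<bar>t\<bar> * R) ^ n / fact n)" .
    qed
    show "summable (\<lambda>k. D * ((\<bar>t\<bar> * R) ^ k / fact k))" using ex by (rule summable_mult)
  qed
  have key: "norm ((\<Sum>k. t ^ k *\<^sub>R C k) - C 0) \<le> \<bar>t\<bar> * (D * R * exp R)" if t1: "\<bar>t\<bar> \<le> 1" for t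
  proof -
    have "(\<Sum>k. t ^ k *\<^sub>R C k) - C 0 = (\<Sum>k. t ^ Suc k *\<^sub>R C (Suc k))"
      using suminf_split_head[OF sm[of t]] by simp
    also have "norm \<dots> \<le> (\<Sum>k. \<bar>t\<bar> * (D * R * (R ^ k / fact k)))"
    proof (rule order_trans[OF summable_norm])
      have b: "norm (t ^ Suc k *\<^sub>R C (Suc k)) \<le> \<bar>t\<bar> * (D * R * (R ^ k / fact k))" for k
      proof -
        have "norm (t ^ Suc k *\<^sub>R C (Suc k)) = \<bar>t\<bar> * \<bar>t\<bar> ^ k * norm (C (Suc k))"
          by (simp add: power_abs abs_mult)
        also have "\<dots> \<le> \<bar>t\<bar> * 1 * (D * R ^ Suc k / fact (Suc k))"
          using t1 bnd[of "Suc k"]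
          by (intro mult_mono mult_left_mono) (auto simp: power_le_one)
        also have "\<dots> \<le> \<bar>t\<bar> * (D * R * (R ^ k / fact k))"
        proof -
          have f: "(fact k::real) \<le> fact (Suc k)" by (rule fact_mono) simp
          have "R ^ k / fact (Suc k) \<le> R ^ k / (fact k::real)"
            by (rule divide_left_mono[OF f]) (use R in auto)
          then have "D * R * (R ^ k / fact (Suc k)) \<le> D * R * (R ^ k / fact k)"
            using D R by (intro mult_left_mono) auto
          moreover have "D * R ^ Suc k / fact (Suc k) = D * R * (R ^ k / fact (Suc k))" by simp
          ultimately have "D * R ^ Suc k / fact (Suc k) \<le> D * R * (R ^ k / fact k)" by linarith
          then have "\<bar>t\<bar> * (D * R ^ Suc k / fact (Suc k)) \<le> \<bar>t\<bar> * (D * R * (R ^ k / fact k))"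
            by (rule mult_left_mono) simp
          then show ?thesis by (simp only: mult_1_right)
        qed
        finally show ?thesis .
      qed
      have s2: "summable (\<lambda>k. \<bar>t\<bar> * (D * R * (R ^ k / fact k)))"
        by (intro summable_mult ex)
      show "summable (\<lambda>k. norm (t ^ Suc k *\<^sub>R C (Suc k)))"
        by (rule summable_comparison_test[OF _ s2]) (use b in auto)
      show "(\<Sum>k. norm (t ^ Suc k *\<^sub>R C (Suc k))) \<le> (\<Sum>k. \<bar>t\<bar> * (D * R * (R ^ k / fact k)))"
        by (rule suminf_le[OF b _ s2]) (rule summable_comparison_test[OF _ s2], use b in auto)
    qed
    also have "\<dots> = \<bar>t\<bar> * (D * R * exp R)"
      using exp_converges[of R] by (simp add: suminf_mult sums_iff ex divide_inverse mult.commute)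
    finally show ?thesis .
  qed
  show "((\<lambda>t. \<Sum>k. t ^ k *\<^sub>R C k) \<longlongrightarrow> C 0) (at 0)"
  proof (rule LIM_zero_cancel, rule Lim_null_comparison)
    show "\<forall>\<^sub>F t in at 0. norm ((\<Sum>k. t ^ k *\<^sub>R C k) - C 0) \<le> \<bar>t\<bar> * (D * R * exp R)"
      unfolding eventually_at by (intro exI[of _ 1]) (auto intro: key)
    have "((\<lambda>t::real. \<bar>t\<bar> * (D * R * exp R)) \<longlongrightarrow> \<bar>0\<bar> * (D * R * exp R)) (at 0)"
      by (intro tendsto_intros)
    then show "((\<lambda>t::real. \<bar>t\<bar> * (D * R * exp R)) \<longlongrightarrow> 0) (at 0)" by simp
  qed
qed


definition Gt :: "real^'n^'n \<Rightarrow> real \<Rightarrow> real^'n^'n" where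
  "Gt A t = (\<Sum>k. t ^ k *\<^sub>R ((1 / fact (k+2)) *\<^sub>R mat_pow A (k+2)))"

lemma exp_taylor:
  fixes A :: "real^'n^'n"
  shows "mat_exp (t *\<^sub>R A) = mat 1 + t *\<^sub>R A + t^2 *\<^sub>R Gt A t"
    and "(Gt A \<longlongrightarrow> (1/2) *\<^sub>R (A ** A)) (at 0)"
proof -
  obtain N c where Nc: "N \<ge> 0" "c \<ge> 0" "\<And>k. norm (mat_pow A k) \<le> N * c ^ k"
    using mat_pow_bound[of A] by blast
  define C where "C k = (1 / fact k) *\<^sub>R mat_pow A k" for k
  have bC: "norm (C k) \<le> N * c ^ k / fact k" for k
    using Nc(3)[of k] by (simp add: C_def divide_simps mult.commute)
  have bC2: "norm (C (k+2)) \<le> (N * c^2) * c ^ k / fact k" for k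
  proof -
    have f: "(fact k::real) \<le> fact (k+2)" by (rule fact_mono) simp
    have "norm (C (k+2)) \<le> N * c ^ (k+2) / fact (k+2)" by (rule bC)
    also have "\<dots> \<le> N * c ^ (k+2) / fact k"
      by (rule divide_left_mono[OF f]) (use Nc in auto)
    also have "\<dots> = (N * c^2) * c ^ k / fact k" by (simp add: power_add power2_eq_square mult_ac)
    finally show ?thesis .
  qed
  have sm: "summable (\<lambda>k. t ^ k *\<^sub>R C k)"
    by (rule powser_facts(1)[OF Nc(1) Nc(2) bC])
  have sm2: "summable (\<lambda>k. t ^ k *\<^sub>R C (k+2))"
    by (rule powser_facts(1)[of "N * c^2" c, OF _ Nc(2) bC2]) (use Nc in auto)
  have "mat_exp (t *\<^sub>R A) = (\<Sum>k. t ^ k *\<^sub>R C k)"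
    unfolding mat_exp_def C_def by (simp add: mat_pow_scale mult.commute)
  also have "\<dots> = (\<Sum>k. t ^ (k+2) *\<^sub>R C (k+2)) + (\<Sum>i<2. t ^ i *\<^sub>R C i)"
    by (rule suminf_split_initial_segment[OF sm])
  also have "(\<Sum>k. t ^ (k+2) *\<^sub>R C (k+2)) = t^2 *\<^sub>R (\<Sum>k. t ^ k *\<^sub>R C (k+2))"
    using suminf_scaleR_right[OF sm2, of "t^2"] by (simp add: power_add power2_eq_square mult_ac)
  also have "(\<Sum>i<2. t ^ i *\<^sub>R C i) = mat 1 + t *\<^sub>R A"
    by (simp add: C_def eval_nat_numeral)
  also have "(\<Sum>k. t ^ k *\<^sub>R C (k+2)) = Gt A t"
    by (simp add: Gt_def C_def)
  finally show "mat_exp (t *\<^sub>R A) = mat 1 + t *\<^sub>R A + t^2 *\<^sub>R Gt A t" by (simp add: algebra_simps)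
  have "((\<lambda>t. \<Sum>k. t ^ k *\<^sub>R C (k+2)) \<longlongrightarrow> C (0+2)) (at 0)"
    by (rule powser_facts(2)[of "N * c^2" c, OF _ Nc(2) bC2]) (use Nc in auto)
  moreover have "C (0+2) = (1/2) *\<^sub>R (A ** A)" by (simp add: C_def eval_nat_numeral)
  moreover have "(\<lambda>t. \<Sum>k. t ^ k *\<^sub>R C (k+2)) = Gt A" by (simp add: Gt_def C_def fun_eq_iff)
  ultimately show "(Gt A \<longlongrightarrow> (1/2) *\<^sub>R (A ** A)) (at 0)" by simp
qed



lemma vanish_lemma:
  fixes X :: "'a::real_normed_vector" and Y :: "real \<Rightarrow> 'a"
  assumes eq: "\<And>t. t *\<^sub>R X + t^2 *\<^sub>R Y t = 0" and lim: "(Y \<longlongrightarrow> Y0) (at 0)"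
  shows "X = 0" "Y0 = 0"
proof -
  have e1: "X = - t *\<^sub>R Y t" if "t \<noteq> 0" for t
  proof -
    have "t *\<^sub>R (X + t *\<^sub>R Y t) = 0" using eq[of t] by (simp add: algebra_simps power2_eq_square)
    then have "X + t *\<^sub>R Y t = 0" using that by simp
    then show ?thesis by (simp add: algebra_simps eq_neg_iff_add_eq_0)
  qed
  have "((\<lambda>t. - t *\<^sub>R Y t) \<longlongrightarrow> - 0 *\<^sub>R Y0) (at 0)" by (intro tendsto_intros lim)
  then have l1: "((\<lambda>t. - t *\<^sub>R Y t) \<longlongrightarrow> 0) (at 0)" by simp
  have "((\<lambda>t. X) \<longlongrightarrow> 0) (at (0::real))"
    by (rule Lim_transform_eventually[OF l1]) (auto simp: eventually_at_filter e1)
  then show X0: "X = 0" by (rule LIM_const_eq)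
  have e2: "Y t = 0" if "t \<noteq> 0" for t
    using eq[of t] X0 that by simp
  have "((\<lambda>t. 0) \<longlongrightarrow> Y0) (at (0::real))"
    by (rule Lim_transform_eventually[OF lim]) (auto simp: eventually_at_filter e2)
  then show "Y0 = 0" using LIM_const_eq by metis
qed


lemmas mm_addL = bounded_bilinear.add_left[OF bb_mm]
lemmas mm_addR = bounded_bilinear.add_right[OF bb_mm]
lemmas mm_diffL = bounded_bilinear.diff_left[OF bb_mm]
lemmas mm_diffR = bounded_bilinear.diff_right[OF bb_mm]
lemmas mm_minusL = bounded_bilinear.minus_left[OF bb_mm]
lemmas mm_minusR = bounded_bilinear.minus_right[OF bb_mm]

lemma commute_limits:
  fixes Q A B :: "real^'n^'n"
  assumes c: "\<And>t. Q ** (mat_exp (t *\<^sub>R A) ** mat_exp (t *\<^sub>R B)) = (mat_exp (t *\<^sub>R A) ** mat_exp (t *\<^sub>R B)) ** Q"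
  shows "Q ** (A + B) = (A + B) ** Q"
    and "Q ** ((1/2) *\<^sub>R (A ** A) + (1/2) *\<^sub>R (B ** B) + A ** B) = ((1/2) *\<^sub>R (A ** A) + (1/2) *\<^sub>R (B ** B) + A ** B) ** Q"
proof -
  define Dm where "Dm X = Q ** X - X ** Q" for X :: "real^'n^'n"
  define H where "H t = Gt A t + Gt B t + A ** B + t *\<^sub>R (A ** Gt B t + Gt A t ** B) + t^2 *\<^sub>R (Gt A t ** Gt B t)" for t
  have prod: "mat_exp (t *\<^sub>R A) ** mat_exp (t *\<^sub>R B) = mat 1 + t *\<^sub>R (A + B) + t^2 *\<^sub>R H t" for t
    unfolding exp_taylor(1) H_def
    by (simp add: mm_addL mm_addR mm_scale_l mm_scale_r algebra_simps power2_eq_square)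
  have eq: "t *\<^sub>R Dm (A + B) + t^2 *\<^sub>R Dm (H t) = 0" for t
  proof -
    have "Dm (mat_exp (t *\<^sub>R A) ** mat_exp (t *\<^sub>R B)) = 0" using c[of t] by (simp add: Dm_def)
    then show ?thesis unfolding prod Dm_def
      by (simp add: mm_addL mm_addR mm_scale_l mm_scale_r mm_diffL mm_diffR algebra_simps)
  qed
  have bb: "bounded_bilinear ((**) :: real^'n^'n \<Rightarrow> real^'n^'n \<Rightarrow> real^'n^'n)" by (rule bb_mm)
  have lA: "(Gt A \<longlongrightarrow> (1/2) *\<^sub>R (A ** A)) (at 0)" and lB: "(Gt B \<longlongrightarrow> (1/2) *\<^sub>R (B ** B)) (at 0)"
    by (rule exp_taylor(2))+
  have "(H \<longlongrightarrow> (1/2) *\<^sub>R (A ** A) + (1/2) *\<^sub>R (B ** B) + A ** B + 0 *\<^sub>R (A ** ((1/2) *\<^sub>R (B ** B)) + ((1/2) *\<^sub>R (A ** A)) ** B) + 0^2 *\<^sub>R (((1/2) *\<^sub>R (A ** A)) ** ((1/2) *\<^sub>R (B ** B)))) (at 0)"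
    unfolding H_def
    by (intro tendsto_intros bounded_bilinear.tendsto[OF bb] lA lB)
  then have lH: "(H \<longlongrightarrow> (1/2) *\<^sub>R (A ** A) + (1/2) *\<^sub>R (B ** B) + A ** B) (at 0)" by simp
  have "((\<lambda>t. Dm (H t)) \<longlongrightarrow> Dm ((1/2) *\<^sub>R (A ** A) + (1/2) *\<^sub>R (B ** B) + A ** B)) (at 0)"
    unfolding Dm_def by (intro tendsto_intros bounded_bilinear.tendsto[OF bb] lH)
  from vanish_lemma[OF eq this] show
    "Q ** (A + B) = (A + B) ** Q"
    "Q ** ((1/2) *\<^sub>R (A ** A) + (1/2) *\<^sub>R (B ** B) + A ** B) = ((1/2) *\<^sub>R (A ** A) + (1/2) *\<^sub>R (B ** B) + A ** B) ** Q"
    by (simp_all add: Dm_def)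
qed



lemma dot_mv: "((A::real^'n^'n) *v x) \<bullet> y = x \<bullet> (transpose A *v y)"
  by (metis dot_lmul_matrix vector_transpose_matrix)

lemma sym_dot: "transpose (S::real^'n^'n) = S \<Longrightarrow> (S *v x) \<bullet> y = x \<bullet> (S *v y)"
  by (simp add: dot_mv)

lemma dimUNIV: "dim (UNIV :: (real^'n) set) = CARD('n)"
  by simp

lemma eigbasis:
  fixes S :: "real^'n^'n"
  assumes sym: "transpose S = S" and card: "card (real_eigenvalues S) = CARD('n)"
  obtains ev where "finite (real_eigenvalues S)" "real_eigenvalues S \<noteq> {}"
    "\<And>l. l \<in> real_eigenvalues S \<Longrightarrow> ev l \<noteq> 0 \<and> S *v ev l = l *\<^sub>R ev l"
    "\<And>w. (\<And>l. l \<in> real_eigenvalues S \<Longrightarrow> w \<bullet> ev l = 0) \<Longrightarrow> w = 0"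
proof -
  let ?E = "real_eigenvalues S"
  have fin: "finite ?E"
  proof (rule ccontr)
    assume "infinite ?E"
    then have "card ?E = 0" by (rule card.infinite)
    moreover have "CARD('n) > 0" by (rule zero_less_card_finite)
    ultimately show False using card by linarith
  qed
  have ne: "?E \<noteq> {}"
  proof
    assume "?E = {}"
    then have "card ?E = 0" by (simp only: card.empty)
    moreover have "CARD('n) > 0" by (rule zero_less_card_finite)
    ultimately show False using card by linarith
  qed
  define ev where "ev l = (SOME v. v \<noteq> 0 \<and> S *v v = l *\<^sub>R v)" for l
  have evp: "ev l \<noteq> 0 \<and> S *v ev l = l *\<^sub>R ev l" if "l \<in> ?E" for l
  proof -
    have "\<exists>v. v \<noteq> 0 \<and> S *v v = l *\<^sub>R v" using that by (simp add: real_eigenvalues_def)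
    from someI_ex[OF this] show ?thesis unfolding ev_def .
  qed
  have orth: "ev l \<bullet> ev m = 0" if "l \<in> ?E" "m \<in> ?E" "l \<noteq> m" for l m
  proof -
    have "l * (ev l \<bullet> ev m) = (S *v ev l) \<bullet> ev m" using evp[OF that(1)] by simp
    also have "\<dots> = ev l \<bullet> (S *v ev m)" by (rule sym_dot[OF sym])
    also have "\<dots> = m * (ev l \<bullet> ev m)" using evp[OF that(2)] by simp
    finally show ?thesis using that(3) by simp
  qed
  have inj: "inj_on ev ?E"
  proof
    fix l m assume lm: "l \<in> ?E" "m \<in> ?E" "ev l = ev m"
    show "l = m"
    proof (rule ccontr)
      assume "l \<noteq> m"
      then have "ev l \<bullet> ev l = 0" using orth[OF lm(1,2)] lm(3) by simp
      then show False using evp[OF lm(1)] by simp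
    qed
  qed
  have po: "pairwise orthogonal (ev ` ?E)"
    unfolding pairwise_def
  proof (intro ballI impI)
    fix x y assume "x \<in> ev ` ?E" "y \<in> ev ` ?E" "x \<noteq> y"
    then obtain l m where "l \<in> ?E" "m \<in> ?E" "x = ev l" "y = ev m" "l \<noteq> m" by blast
    then show "orthogonal x y" unfolding orthogonal_def using orth by blast
  qed
  have z: "0 \<notin> ev ` ?E" using evp by force
  have indep: "independent (ev ` ?E)"
    by (rule pairwise_orthogonal_independent[OF po z])
  have cardB: "card (ev ` ?E) = CARD('n)" using card inj by (simp add: card_image)
  have span: "UNIV \<subseteq> span (ev ` ?E)"
    by (rule card_ge_dim_independent[OF _ indep]) (auto simp: cardB)
  have zero: "w = 0" if w: "\<And>l. l \<in> ?E \<Longrightarrow> w \<bullet> ev l = 0" for w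
  proof -
    have "orthogonal w w"
    proof (rule orthogonal_to_span[of w "ev ` ?E"])
      show "w \<in> span (ev ` ?E)" using span by blast
      fix y assume "y \<in> ev ` ?E"
      then obtain l where "l \<in> ?E" "y = ev l" by blast
      then show "orthogonal w y" using w unfolding orthogonal_def by simp
    qed
    then show ?thesis by (simp add: orthogonal_def)
  qed
  show ?thesis
  proof (rule that[of ev])
    show "finite ?E" by (rule fin)
    show "?E \<noteq> {}" by (rule ne)
    show "\<And>l. l \<in> ?E \<Longrightarrow> ev l \<noteq> 0 \<and> S *v ev l = l *\<^sub>R ev l" by (rule evp)
    show "\<And>w. (\<And>l. l \<in> ?E \<Longrightarrow> w \<bullet> ev l = 0) \<Longrightarrow> w = 0" by (rule zero)
  qed
qed



declare transpose_matrix_vector[simp del]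

lemma eig_orth:
  assumes "transpose (S::real^'n^'n) = S" "S *v u = a *\<^sub>R u" "S *v v = b *\<^sub>R v" "a \<noteq> b"
  shows "u \<bullet> v = 0"
proof -
  have "a * (u \<bullet> v) = (S *v u) \<bullet> v" using assms(2) by simp
  also have "\<dots> = u \<bullet> (S *v v)" by (rule sym_dot[OF assms(1)])
  also have "\<dots> = b * (u \<bullet> v)" using assms(3) by simp
  finally show ?thesis using assms(4) by simp
qed

lemma dot_mv2: "x \<bullet> ((A::real^'n^'n) *v y) = (transpose A *v x) \<bullet> y"
  using dot_mv[of "transpose A" x y] by simp

lemma neg_mat1_mv: "(- mat 1 :: real^'n^'n) *v x = - x"
  using matrix_vector_mult_diff_rdistrib[of 0 "mat 1" x] by simp

lemma mv_scale_mat1: "((c::real) *\<^sub>R mat 1 :: real^'n^'n) *v x = c *\<^sub>R x"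
  by (simp add: scaleR_matrix_vector_assoc[symmetric])

lemma main_alg:
  fixes Q S L :: "real^'n^'n"
  assumes orth: "orthogonal_matrix Q" and sym: "transpose S = S"
    and card: "card (real_eigenvalues S) = CARD('n)"
    and noinv: "\<forall>k\<in>{1..CARD('n) - 1}. \<not> (\<exists>V. dim V = k \<and> real_invariant_subspace S V
                                          \<and> real_invariant_subspace L V)"
    and cS: "Q ** S = S ** Q" and cK: "Q ** (L ** S - S ** L) = (L ** S - S ** L) ** Q"
  shows "Q = mat 1 \<or> Q = - mat 1"
proof -
  let ?E = "real_eigenvalues S"
  obtain ev where fin: "finite ?E" and ne: "?E \<noteq> {}"
    and evp: "\<And>l. l \<in> ?E \<Longrightarrow> ev l \<noteq> 0 \<and> S *v ev l = l *\<^sub>R ev l"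
    and zero: "\<And>w. (\<And>l. l \<in> ?E \<Longrightarrow> w \<bullet> ev l = 0) \<Longrightarrow> w = 0"
    using eigbasis[OF sym card] by blast
  have QtQ: "transpose Q ** Q = mat 1" and QQt: "Q ** transpose Q = mat 1"
    using orth by (auto simp: orthogonal_matrix_def)
  have eps_ex: "\<exists>e. (e = 1 \<or> e = -1) \<and> Q *v ev l = e *\<^sub>R ev l" if l: "l \<in> ?E" for l
  proof -
    define v where "v = ev l"
    define w where "w = Q *v v"
    have v: "v \<noteq> 0" "S *v v = l *\<^sub>R v" using evp[OF l] by (auto simp: v_def)
    have Sw: "S *v w = l *\<^sub>R w"
    proof -
      have "S *v w = (S ** Q) *v v" by (simp add: w_def matrix_vector_mul_assoc)
      also have "\<dots> = Q *v (S *v v)" by (simp add: cS[symmetric] matrix_vector_mul_assoc)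
      also have "\<dots> = l *\<^sub>R w" by (simp add: v(2) w_def matrix_vector_mult_scaleR)
      finally show ?thesis .
    qed
    define c where "c = (w \<bullet> v) / (v \<bullet> v)"
    have vv: "v \<bullet> v \<noteq> 0" using v(1) by simp
    have "w - c *\<^sub>R v = 0"
    proof (rule zero)
      fix m assume m: "m \<in> ?E"
      show "(w - c *\<^sub>R v) \<bullet> ev m = 0"
      proof (cases "m = l")
        case True
        then show ?thesis using vv by (simp add: v_def[symmetric] c_def inner_diff_left)
      next
        case False
        have "w \<bullet> ev m = 0" by (rule eig_orth[OF sym Sw _ False[symmetric]]) (use evp[OF m] in simp)
        moreover have "v \<bullet> ev m = 0" by (rule eig_orth[OF sym v(2) _ False[symmetric]]) (use evp[OF m] in simp)
        ultimately show ?thesis by (simp add: inner_diff_left)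
      qed
    qed
    then have wc: "w = c *\<^sub>R v" by simp
    have "w \<bullet> w = v \<bullet> v"
    proof -
      have "w \<bullet> w = (transpose Q *v w) \<bullet> v" unfolding w_def by (rule dot_mv2)
      also have "transpose Q *v w = v" by (simp add: w_def matrix_vector_mul_assoc QtQ)
      finally show ?thesis .
    qed
    then have "c * c * (v \<bullet> v) = 1 * (v \<bullet> v)" using wc by simp
    then have "c * c = 1" using vv by (metis mult_right_cancel)
    then have "c = 1 \<or> c = -1" by (metis square_eq_1_iff)
    then show ?thesis using wc by (auto simp: w_def v_def)
  qed
  obtain eps where eps: "\<And>l. l \<in> ?E \<Longrightarrow> (eps l = 1 \<or> eps l = -1) \<and> Q *v ev l = eps l *\<^sub>R ev l"
    using bchoice[of ?E "\<lambda>l e. (e = 1 \<or> e = -1) \<and> Q *v ev l = e *\<^sub>R ev l"] eps_ex by blast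
  have epsT: "transpose Q *v ev l = eps l *\<^sub>R ev l" if l: "l \<in> ?E" for l
  proof -
    have "ev l = transpose Q *v (Q *v ev l)" by (simp add: matrix_vector_mul_assoc QtQ)
    also have "\<dots> = eps l *\<^sub>R (transpose Q *v ev l)" using eps[OF l] by (simp add: matrix_vector_mult_scaleR)
    finally have "eps l *\<^sub>R ev l = (eps l * eps l) *\<^sub>R (transpose Q *v ev l)"
      by (metis scaleR_scaleR)
    moreover have "eps l * eps l = 1" using eps[OF l] by auto
    ultimately show ?thesis by simp
  qed
  define X where "X = Q ** L - L ** Q"
  define K where "K = L ** S - S ** L"
  have Xev: "ev l \<bullet> (X *v ev m) = 0" if l: "l \<in> ?E" and m: "m \<in> ?E" for l m
  proof -
    define g where "g = ev l \<bullet> (L *v ev m)"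
    have Sl: "S *v ev l = l *\<^sub>R ev l" and Sm: "S *v ev m = m *\<^sub>R ev m" using evp l m by auto
    have Qm: "Q *v ev m = eps m *\<^sub>R ev m" using eps[OF m] by simp
    have a1: "ev l \<bullet> ((Q ** Y) *v ev m) = eps l * (ev l \<bullet> (Y *v ev m))" for Y
      by (simp add: matrix_vector_mul_assoc[symmetric] dot_mv2[of "ev l" Q] epsT[OF l])
    have a2: "ev l \<bullet> ((Y ** Q) *v ev m) = eps m * (ev l \<bullet> (Y *v ev m))" for Y
      by (simp add: matrix_vector_mul_assoc[symmetric] Qm matrix_vector_mult_scaleR)
    have kv: "ev l \<bullet> (K *v ev m) = (m - l) * g"
    proof -
      have "ev l \<bullet> (K *v ev m) = ev l \<bullet> (L *v (S *v ev m)) - ev l \<bullet> (S *v (L *v ev m))"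
        by (simp add: K_def matrix_vector_mult_diff_rdistrib matrix_vector_mul_assoc inner_diff_right)
      also have "ev l \<bullet> (S *v (L *v ev m)) = (S *v ev l) \<bullet> (L *v ev m)" by (simp add: sym_dot[OF sym])
      finally show ?thesis by (simp add: Sl Sm g_def matrix_vector_mult_scaleR algebra_simps)
    qed
    have "ev l \<bullet> ((Q ** K) *v ev m) = ev l \<bullet> ((K ** Q) *v ev m)" using cK by (simp add: K_def)
    then have "eps l * ((m - l) * g) = eps m * ((m - l) * g)" by (simp add: a1 a2 kv)
    then have "(eps l - eps m) * ((m - l) * g) = 0" by (simp only: left_diff_distrib)
    then have "(eps l - eps m) * g = 0 \<or> m = l" by auto
    moreover have "ev l \<bullet> (X *v ev m) = (eps l - eps m) * g"
      by (simp add: X_def matrix_vector_mult_diff_rdistrib inner_diff_right a1[of L, simplified] a2[of L, simplified] g_def algebra_simps)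
    ultimately show ?thesis by auto
  qed
  have "transpose X *v y = 0" for y
  proof (rule zero)
    fix m assume m: "m \<in> ?E"
    have Xm: "X *v ev m = 0" by (rule zero) (use Xev m in \<open>simp add: inner_commute\<close>)
    show "(transpose X *v y) \<bullet> ev m = 0" using dot_mv2[of y X "ev m"] Xm by simp
  qed
  then have "transpose X = 0" by (simp add: matrix_eq)
  moreover have "transpose (0::real^'n^'n) = 0" by (simp add: transpose_def vec_eq_iff)
  ultimately have "X = 0" by (metis transpose_transpose)
  then have cL: "Q ** L = L ** Q" by (simp add: X_def)
  define V where "V s = {x. Q *v x = s *\<^sub>R x}" for s :: real
  have subV: "subspace (V s)" for s
    unfolding subspace_def V_def by (auto simp: matrix_vector_right_distrib matrix_vector_mult_scaleR algebra_simps)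
  have invV: "real_invariant_subspace T (V s)" if cT: "Q ** T = T ** Q" for T s
    unfolding real_invariant_subspace_def
  proof (intro conjI ballI)
    show "subspace (V s)" by (rule subV)
    fix x assume "x \<in> V s"
    then have "Q *v x = s *\<^sub>R x" by (simp add: V_def)
    then have "Q *v (T *v x) = s *\<^sub>R (T *v x)"
      by (metis cT matrix_vector_mul_assoc matrix_vector_mult_scaleR)
    then show "T *v x \<in> V s" by (simp add: V_def)
  qed
  have dimV: "dim (V s) = 0 \<or> dim (V s) = CARD('n)" for s
  proof -
    have "dim (V s) \<le> CARD('n)" by (rule dim_subset_UNIV_cart)
    moreover have "dim (V s) \<notin> {1..CARD('n) - 1}"
      using noinv invV[OF cS, of s] invV[OF cL, of s] by blast
    moreover have "\<forall>d::nat. d \<le> CARD('n) \<longrightarrow> d \<notin> {1..CARD('n) - 1} \<longrightarrow> d = 0 \<or> d = CARD('n)"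
      by auto
    ultimately show ?thesis by blast
  qed
  have full: "Q = s *\<^sub>R mat 1" if "dim (V s) = CARD('n)" for s
  proof -
    have "dim (V s) = DIM(real^'n)" using that by simp
    then have "span (V s) = UNIV" by (simp only: dim_eq_full)
    then have "V s = UNIV" using subV[of s] by (metis span_eq_iff)
    then have "Q *v x = (s *\<^sub>R mat 1) *v x" for x by (auto simp: V_def mv_scale_mat1)
    then show ?thesis by (simp add: matrix_eq)
  qed
  obtain l where l: "l \<in> ?E" using ne by blast
  have "ev l \<in> V (eps l)" using eps[OF l] by (simp add: V_def)
  moreover have "ev l \<noteq> 0" using evp[OF l] by simp
  ultimately have "dim (V (eps l)) \<noteq> 0" by auto
  then have "dim (V (eps l)) = CARD('n)" using dimV[of "eps l"] by metis
  then have "Q = eps l *\<^sub>R mat 1" by (rule full)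
  then show ?thesis using eps[OF l] by auto
qed



lemma transpose_add': "transpose ((A::real^'n^'n) + B) = transpose A + transpose B"
  by (simp add: transpose_def vec_eq_iff)
lemma transpose_neg': "transpose (- (A::real^'n^'n)) = - transpose A"
  by (simp add: transpose_def vec_eq_iff)

lemma comm_prod: "(Q::real^'n^'n) ** X = X ** Q \<Longrightarrow> Q ** Y = Y ** Q \<Longrightarrow> Q ** (X ** Y) = (X ** Y) ** Q"
  by (metis matrix_mul_assoc)

theorem proposition5p1:
  fixes M S L :: "real^'n^'n"
  assumes "CARD('n) \<ge> 2"
    and "M = S + L"
    and "sym_distinct_eig S"
    and "skew_symmetric_matrix L"
    and "\<forall>k\<in>{1..CARD('n) - 1}. \<not> (\<exists>V. dim V = k \<and> real_invariant_subspace S V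
                                          \<and> real_invariant_subspace L V)"
  shows "(\<Inter>x\<in>{0<..}. orth_commutant
            (mat_neg_powr x M ** mat_neg_powr x (transpose M))) = {mat 1, - mat 1}"
proof
  have sym: "transpose S = S" and card: "card (real_eigenvalues S) = CARD('n)"
    using assms(3) by (auto simp: sym_distinct_eig_def symmetric_matrix_def)
  have skew: "transpose L = - L" using assms(4) by (simp add: skew_symmetric_matrix_def)
  have MT: "transpose M = S - L" using assms(2) sym skew by (simp add: transpose_add')
  define A where "A = - M"
  define B where "B = - transpose M"
  have negp: "mat_neg_powr (exp t) X = mat_exp (t *\<^sub>R (- X))" for t and X :: "real^'n^'n"
    by (simp add: mat_neg_powr_def)
  show "(\<Inter>x\<in>{0<..}. orth_commutant (mat_neg_powr x M ** mat_neg_powr x (transpose M))) \<subseteq> {mat 1, - mat 1}"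
  proof
    fix Q assume Q: "Q \<in> (\<Inter>x\<in>{0<..}. orth_commutant (mat_neg_powr x M ** mat_neg_powr x (transpose M)))"
    have "Q \<in> orth_commutant (mat_neg_powr 1 M ** mat_neg_powr 1 (transpose M))"
      using Q by (rule INT_D) simp
    then have orth: "orthogonal_matrix Q" by (simp add: orth_commutant_def)
    have c: "Q ** (mat_exp (t *\<^sub>R A) ** mat_exp (t *\<^sub>R B)) = (mat_exp (t *\<^sub>R A) ** mat_exp (t *\<^sub>R B)) ** Q" for t
    proof -
      have "exp t \<in> {0::real<..}" by simp
      then have "Q \<in> orth_commutant (mat_neg_powr (exp t) M ** mat_neg_powr (exp t) (transpose M))"
        using Q by blast
      then show ?thesis by (simp add: orth_commutant_def negp A_def B_def)
    qed
    note cl = commute_limits[OF c]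
    have Ae: "A = - S - L" by (simp add: A_def assms(2))
    have Be: "B = L - S" by (simp add: B_def MT)
    have AB: "A + B = (-2) *\<^sub>R S" unfolding Ae Be by (simp add: algebra_simps scaleR_2)
    have cS: "Q ** S = S ** Q"
    proof -
      have "(-2) *\<^sub>R (Q ** S) = (-2) *\<^sub>R (S ** Q)" using cl(1) unfolding AB by (simp only: mm_scale_l mm_scale_r)
      then show ?thesis by simp
    qed
    have H0: "(1/2) *\<^sub>R (A ** A) + (1/2) *\<^sub>R (B ** B) + A ** B = 2 *\<^sub>R (S ** S) + (L ** S - S ** L)"
      unfolding Ae Be
      by (simp add: mm_addL mm_addR mm_diffL mm_diffR mm_minusL mm_minusR
          algebra_simps scaleR_2) (simp add: vec_eq_iff)
    have cSS: "Q ** (S ** S) = (S ** S) ** Q" by (rule comm_prod[OF cS cS])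
    have cK: "Q ** (L ** S - S ** L) = (L ** S - S ** L) ** Q"
    proof -
      have e: "L ** S - S ** L = ((1/2) *\<^sub>R (A ** A) + (1/2) *\<^sub>R (B ** B) + A ** B) - 2 *\<^sub>R (S ** S)"
        by (simp add: H0)
      show ?thesis unfolding e using cl(2) cSS by (simp add: mm_diffL mm_diffR mm_scale_l mm_scale_r)
    qed
    have "Q = mat 1 \<or> Q = - mat 1" by (rule main_alg[OF orth sym card assms(5) cS cK])
    then show "Q \<in> {mat 1, - mat 1}" by simp
  qed
  show "{mat 1, - mat 1} \<subseteq> (\<Inter>x\<in>{0<..}. orth_commutant (mat_neg_powr x M ** mat_neg_powr x (transpose M)))"
  proof -
    have o1: "orthogonal_matrix (- mat 1 :: real^'n^'n)"
      by (simp add: orthogonal_matrix_def transpose_neg' mm_minusL mm_minusR)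
    show ?thesis using o1 orthogonal_matrix_id
      by (auto simp: orth_commutant_def mm_minusL mm_minusR)
  qed
qed

end
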